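(* For $\alpha\in\mathbb{K}^\times$ let $A_{4,\alpha}$ be the evolution algebra over the field $\mathbb{K}$ with natural basis $\{e_1,e_2\}$ such that $e_1^2=\alpha e_2$ and $e_2^2=e_1+e_2$. For $\alpha,\alpha'\in\mathbb{K}^\times$, $A_{4,\alpha}$ is isomorphic to $A_{4,\alpha'}$ as a $\mathbb{K}$-algebra if and only if $\alpha=\alpha'$.
   Context: An evolution algebra over $\mathbb{K}$ is a $\mathbb{K}$-algebra with a basis $\{e_i\}$ (natural basis) such that $e_ie_j=0$ for $i\neq j$. *)

theory Defs
  imports Main
begin

text \<open>A two-dimensional K-algebra is represented on coordinate vectors
  (a1, a2) :: 'k \<times> 'k, meaning a1 e1 + a2 e2 for the natural basis {e1, e2}.\<close>

definition vadd :: "'k::field \<times> 'k \<Rightarrow> 'k \<times> 'k \<Rightarrow> 'k \<times> 'k" where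
  "vadd x y = (fst x + fst y, snd x + snd y)"

definition vscale :: "'k::field \<Rightarrow> 'k \<times> 'k \<Rightarrow> 'k \<times> 'k" where
  "vscale c x = (c * fst x, c * snd x)"

text \<open>Multiplication of A_{4,alpha}: e1 e1 = alpha e2, e2 e2 = e1 + e2, e1 e2 = e2 e1 = 0,
  extended bilinearly.\<close>
definition A4_mult :: "'k::field \<Rightarrow> 'k \<times> 'k \<Rightarrow> 'k \<times> 'k \<Rightarrow> 'k \<times> 'k" where
  "A4_mult \<alpha> x y =
     vadd (vscale (fst x * fst y) (0, \<alpha>)) (vscale (snd x * snd y) (1, 1))"

definition alg_iso ::
  "('k::field \<times> 'k \<Rightarrow> 'k \<times> 'k \<Rightarrow> 'k \<times> 'k) \<Rightarrow> ('k \<times> 'k \<Rightarrow> 'k \<times> 'k \<Rightarrow> 'k \<times> 'k)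
    \<Rightarrow> ('k \<times> 'k \<Rightarrow> 'k \<times> 'k) \<Rightarrow> bool" where
  "alg_iso m1 m2 f \<longleftrightarrow> bij f
     \<and> (\<forall>x y. f (vadd x y) = vadd (f x) (f y))
     \<and> (\<forall>c x. f (vscale c x) = vscale c (f x))
     \<and> (\<forall>x y. f (m1 x y) = m2 (f x) (f y))"

definition alg_isomorphic where
  "alg_isomorphic m1 m2 \<longleftrightarrow> (\<exists>f. alg_iso m1 m2 f)"

end

theory Submission
  imports Defs
begin

theorem lemma3p5:
  fixes \<alpha> \<alpha>' :: "'k::field"
  assumes "\<alpha> \<noteq> 0" and "\<alpha>' \<noteq> 0"
  shows "alg_isomorphic (A4_mult \<alpha>) (A4_mult \<alpha>') \<longleftrightarrow> \<alpha> = \<alpha>'"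
proof
  assume "\<alpha> = \<alpha>'"
  have "alg_iso (A4_mult \<alpha>) (A4_mult \<alpha>') id"
    unfolding alg_iso_def using \<open>\<alpha> = \<alpha>'\<close> by simp
  then show "alg_isomorphic (A4_mult \<alpha>) (A4_mult \<alpha>')"
    unfolding alg_isomorphic_def by blast
next
  assume "alg_isomorphic (A4_mult \<alpha>) (A4_mult \<alpha>')"
  then obtain f where f: "alg_iso (A4_mult \<alpha>) (A4_mult \<alpha>') f"
    unfolding alg_isomorphic_def by blast
  have bij: "bij f" and add: "\<And>x y. f (vadd x y) = vadd (f x) (f y)"
    and sc: "\<And>c x. f (vscale c x) = vscale c (f x)"
    and mu: "\<And>x y. f (A4_mult \<alpha> x y) = A4_mult \<alpha>' (f x) (f y)"
    using f unfolding alg_iso_def by auto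
  obtain a b where p: "f (1,0) = (a,b)" by (cases "f (1,0)")
  obtain c d where q: "f (0,1) = (c,d)" by (cases "f (0,1)")
  have z: "f (0,0) = (0,0)"
    using sc[of 0 "(0,0)"] by (simp add: vscale_def)
  have pnz: "(a,b) \<noteq> (0,0)"
  proof
    assume "(a,b) = (0,0)"
    then have "f (1,0) = f (0,0)" using p z by simp
    then show False using bij unfolding bij_def inj_def by (metis prod.inject zero_neq_one)
  qed
  have e12: "A4_mult \<alpha>' (a,b) (c,d) = (0,0)"
    using mu[of "(1,0)" "(0,1)"] p q z by (simp add: A4_mult_def vadd_def vscale_def)
  have e11: "A4_mult \<alpha>' (a,b) (a,b) = vscale \<alpha> (c,d)"
  proof -
    have "A4_mult \<alpha> (1,0) (1,0) = vscale \<alpha> (0,1)" by (simp add: A4_mult_def vadd_def vscale_def)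
    then show ?thesis using mu[of "(1,0)" "(1,0)"] p q sc[of \<alpha> "(0,1)"] by simp
  qed
  have e22: "A4_mult \<alpha>' (c,d) (c,d) = vadd (a,b) (c,d)"
  proof -
    have "A4_mult \<alpha> (0,1) (0,1) = vadd (1,0) (0,1)" by (simp add: A4_mult_def vadd_def vscale_def)
    then show ?thesis using mu[of "(0,1)" "(0,1)"] p q add[of "(1,0)" "(0,1)"] by simp
  qed
  have h1_h2: "b*d = 0 \<and> a*c*\<alpha>' + b*d = 0"
    using e12 by (auto simp add: A4_mult_def vadd_def vscale_def)
  note h1 = conjunct1[OF h1_h2] and h2 = conjunct2[OF h1_h2]
  have h3_h4: "b*b = \<alpha>*c \<and> a*a*\<alpha>' + b*b = \<alpha>*d"
    using e11 by (auto simp add: A4_mult_def vadd_def vscale_def)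
  note h3 = conjunct1[OF h3_h4] and h4 = conjunct2[OF h3_h4]
  have h5_h6: "d*d = a + c \<and> c*c*\<alpha>' + d*d = b + d"
    using e22 by (auto simp add: A4_mult_def vadd_def vscale_def)
  note h5 = conjunct1[OF h5_h6] and h6 = conjunct2[OF h5_h6]
  have ac: "a*c = 0" proof - have "a*c*\<alpha>' = 0" using h2 by (simp only: h1 add_0_right) then show ?thesis using assms by simp qed
  show "\<alpha> = \<alpha>'"
  proof (cases "a = 0")
    case True
    then have "b \<noteq> 0" using pnz by simp
    then have "d = 0" using h1 by simp
    then have "b*b = 0" using h4 True by simp
    then show ?thesis using \<open>b \<noteq> 0\<close> by simp
  next
    case False
    then have c0: "c = 0" using ac by simp
    then have b0: "b = 0" using h3 by simp
    have "d*d = d" using h6 c0 b0 by simp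
    then have "d = 0 \<or> d = 1" by (metis mult_cancel_left2 mult_eq_0_iff)
    moreover have "d \<noteq> 0" using h5 c0 False by auto
    ultimately have d1: "d = 1" by simp
    then have "a = 1" using h5 c0 by simp
    then show ?thesis using h4 b0 d1 by simp
  qed
qed

end
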